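(* Suppose $G\in\tilde{\mathcal C}$ is of the form $G(\psi)=q(M^\gamma_{\mathrm{ref}}(\psi)(h_0),\dots,M^\gamma_{\mathrm{ref}}(\psi)(h_k))$ and $h\in E$ is continuous. Then for $\mu_{\mathrm{ref}}$-a.e. $\psi$, $D_hG(\psi)=\gamma\sum_{i=0}^k\partial_iq\big(M^\gamma_{\mathrm{ref}}(\psi)(h_0),\dots,M^\gamma_{\mathrm{ref}}(\psi)(h_k)\big)\,M^\gamma_{\mathrm{ref}}(\psi)(h_ih)$. Moreover, if $G\in\mathcal C$ then for every continuous $h\in E$ there is a constant $C$ depending only on $G$ and $h$ such that $|D_hG(\psi)|\le C$ for $\mu_{\mathrm{ref}}$-a.e. $\psi$.
   Context: $M$ closed manifold of even dimension $n$ with metric $g_{\mathrm{ref}}$, volume $\omega_{\mathrm{ref}}$, co-polyharmonic (GJMS) operator $P_{\mathrm{ref}}$ (non-negative, self-adjoint, kernel the constants); $a_n=\frac{2}{(n/2-1)!(4\pi)^{n/2}}$, $p_{\mathrm{ref}}=a_nP_{\mathrm{ref}}$; $H^s_{\mathrm{ref}}=(1+p_{\mathrm{ref}})^{-s/n}L^2(\omega_{\mathrm{ref}})$ (completion for $s<0$), $H^{0-}_{\mathrm{ref}}=\bigcap_{s>0}H^{-s}_{\mathrm{ref}}$, $\mathring{}$ denotes mean-zero subspaces. $\mu_{\mathrm{ref}}$: centered Gaussian measure on $\mathring H^{0-}_{\mathrm{ref}}$ with covariance kernel the Green kernel of $p_{\mathrm{ref}}$ on mean-zero functions. $\gamma\in[0,\sqrt{2n})$;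 $M^\gamma_{\mathrm{ref}}$ is the co-polyharmonic GMC map into finite Borel measures on $M$, satisfying $M^\gamma_{\mathrm{ref}}(\psi+h)=e^{\gamma h}M^\gamma_{\mathrm{ref}}(\psi)$ for $\mu_{\mathrm{ref}}$-a.e. $\psi$ and $h\in\mathring H^{n/2}_{\mathrm{ref}}$, and $M^\gamma_{\mathrm{ref}}(\psi+c)=e^{\gamma c}M^\gamma_{\mathrm{ref}}(\psi)$. $E=H^{n/2}_{\mathrm{ref}}$. $\tilde{\mathcal C}$: functionals $G(\psi)=q(M^\gamma_{\mathrm{ref}}(\psi)(h_0),\dots,M^\gamma_{\mathrm{ref}}(\psi)(h_k))$ with $q\in C^2(\mathbb R^{k+1})$, $h_i\in C^\infty(M)$, $h_0\equiv1$; $\mathcal C\subset\tilde{\mathcal C}$: those where $q$ can be chosen supported in $(\epsilon,\epsilon^{-1})\times K$ for some $\epsilon>0$, compact $K\subset\mathbb R^k$. $D_hG(\psi)=\frac{d}{dt}G(\psi+th)|_{t=0}$; $\mu(h)=\int h\,d\mu$. *)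

theory Defs
  imports "HOL-Probability.Probability"
begin

text \<open>Abstract setting: points of the closed manifold have type 'm, the field
  (distribution) space H^{0-}_ref is an abstract real vector space 'f into which
  the function space E = H^{n/2}_ref is embedded by a map iota.\<close>

text \<open>q in C^2(R^{k+1}); the k+1 coordinates are indexed by a finite type 'n.\<close>
definition C2_fun :: "(real^'n \<Rightarrow> real) \<Rightarrow> bool" where
  "C2_fun q \<longleftrightarrow>
     (\<exists>D. (\<forall>x. (q has_derivative blinfun_apply (D x)) (at x)) \<and>
          (\<exists>D2. (\<forall>x. (D has_derivative blinfun_apply (D2 x)) (at x)) \<and>
                continuous_on UNIV D2))"

definition partial_q :: "(real^'n \<Rightarrow> real) \<Rightarrow> 'n \<Rightarrow> real^'n \<Rightarrow> real" where
  "partial_q q i x = frechet_derivative q (at x) (axis i 1)"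

definition cyl_functional ::
  "(real^'n \<Rightarrow> real) \<Rightarrow> ('n \<Rightarrow> 'm \<Rightarrow> real) \<Rightarrow> ('f \<Rightarrow> 'm measure) \<Rightarrow> 'f \<Rightarrow> real" where
  "cyl_functional q hs Mg \<psi> = q (\<chi> i. integral\<^sup>L (Mg \<psi>) (hs i))"

definition dir_deriv :: "('f::real_vector \<Rightarrow> real) \<Rightarrow> 'f \<Rightarrow> 'f \<Rightarrow> real" where
  "dir_deriv G v \<psi> = deriv (\<lambda>t. G (\<psi> + t *\<^sub>R v)) 0"

text \<open>Membership of the representation in the class C: q supported in
  (eps, 1/eps) x K for a compact K (coordinate i0 is the one with h_{i0} = 1;
  K is taken inside the hyperplane x_{i0} = 0, identified with R^k).\<close>
definition supp_class_C :: "(real^'n \<Rightarrow> real) \<Rightarrow> 'n \<Rightarrow> bool" where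
  "supp_class_C q i0 \<longleftrightarrow>
     (\<exists>\<epsilon>>0. \<exists>K. compact K \<and>
        closure {x. q x \<noteq> 0} \<subseteq>
          {x. \<epsilon> < x $ i0 \<and> x $ i0 < 1 / \<epsilon> \<and> (\<chi> j. if j = i0 then 0 else x $ j) \<in> K})"

end

theory Submission
  imports Defs
begin

lemma exp_taylor2: fixes u :: real shows "\<bar>exp u - 1 - u\<bar> \<le> exp \<bar>u\<bar> * u^2"
proof -
  obtain t where t: "\<bar>t\<bar> \<le> \<bar>u\<bar>" "exp u = (\<Sum>m<2. (u ^ m) / fact m) + (exp t / fact 2) * u ^ 2"
    using Maclaurin_exp_le[of u 2] by blast
  have s: "(\<Sum>m<2. (u ^ m) / fact m) = 1 + u" by (simp add: numeral_2_eq_2)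
  have e: "exp u - 1 - u = exp t / 2 * u^2" using t(2) s by simp
  have "exp t \<le> exp \<bar>u\<bar>" using t(1) by simp
  then have "exp t / 2 \<le> exp \<bar>u\<bar>" using exp_gt_zero[of t] by linarith
  then have "exp t / 2 * u^2 \<le> exp \<bar>u\<bar> * u^2"
    by (intro mult_right_mono) auto
  moreover have "0 \<le> exp t / 2 * u^2" by simp
  ultimately show ?thesis using e by (metis abs_of_nonneg)
qed

lemma int_bound:
  fixes f :: "'a \<Rightarrow> real"
  assumes "finite_measure N" "f \<in> borel_measurable N" "\<And>x. \<bar>f x\<bar> \<le> B"
  shows "\<bar>\<integral>x. f x \<partial>N\<bar> \<le> B * measure N (space N)"
proof -
  interpret finite_measure N by fact
  have i: "integrable N f" using assms by (intro integrable_const_bound[where B=B]) auto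
  have "\<bar>\<integral>x. f x \<partial>N\<bar> \<le> (\<integral>x. \<bar>f x\<bar> \<partial>N)" by simp
  also have "\<dots> \<le> (\<integral>x. B \<partial>N)" using i assms(3) by (intro integral_mono) auto
  also have "\<dots> = B * measure N (space N)" by simp
  finally show ?thesis .
qed

lemma deriv_int:
  fixes N :: "'a measure" and f g :: "'a \<Rightarrow> real"
  assumes fm: "finite_measure N" and fM: "f \<in> borel_measurable N" and gM: "g \<in> borel_measurable N"
    and fb: "\<And>x. \<bar>f x\<bar> \<le> Bf" and gb: "\<And>x. \<bar>g x\<bar> \<le> Bg"
  shows "((\<lambda>t. \<integral>x. exp (c * t * g x) * f x \<partial>N) has_real_derivative c * (\<integral>x. f x * g x \<partial>N)) (at 0)"
proof -
  interpret finite_measure N by fact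
  define F where "F t = (\<integral>x. exp (c * t * g x) * f x \<partial>N)" for t
  define D where "D = c * (\<integral>x. f x * g x \<partial>N)"
  define m where "m = measure N (space N)"
  define K where "K = Bf * (exp (\<bar>c\<bar> * Bg) * (c^2 * Bg^2))"
  have Bf0: "0 \<le> Bf" using fb[of undefined] by linarith
  have Bg0: "0 \<le> Bg" using gb[of undefined] by linarith
  have intF: "integrable N (\<lambda>x. exp (c * t * g x) * f x)" for t
  proof (rule integrable_const_bound[where B="exp (\<bar>c * t\<bar> * Bg) * Bf"])
    show "AE x in N. norm (exp (c * t * g x) * f x) \<le> exp (\<bar>c * t\<bar> * Bg) * Bf"
    proof (intro AE_I2)
      fix x
      have "c * t * g x \<le> \<bar>c * t * g x\<bar>" by (rule abs_ge_self)
      also have "\<dots> = \<bar>c * t\<bar> * \<bar>g x\<bar>" by (simp add: abs_mult)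
      also have "\<dots> \<le> \<bar>c * t\<bar> * Bg" using gb[of x] by (intro mult_left_mono) auto
      finally have "c * t * g x \<le> \<bar>c * t\<bar> * Bg" .
      then have "exp (c * t * g x) \<le> exp (\<bar>c * t\<bar> * Bg)" by simp
      then have "exp (c * t * g x) * \<bar>f x\<bar> \<le> exp (\<bar>c * t\<bar> * Bg) * Bf"
        using fb[of x] by (intro mult_mono) auto
      then show "norm (exp (c * t * g x) * f x) \<le> exp (\<bar>c * t\<bar> * Bg) * Bf"
        by (simp add: abs_mult)
    qed
  qed (use fM gM in measurable)
  have intf: "integrable N f" by (rule integrable_const_bound[where B=Bf]) (use fb fM in auto)
  have intfg: "integrable N (\<lambda>x. f x * g x)"
  proof (rule integrable_const_bound[where B="Bf*Bg"])
    show "AE x in N. norm (f x * g x) \<le> Bf * Bg"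
      using fb gb by (intro AE_I2) (simp add: abs_mult mult_mono')
  qed (use fM gM in measurable)
  have R: "F t - F 0 - t * D = (\<integral>x. f x * (exp (c * t * g x) - 1 - c * t * g x) \<partial>N)" for t
  proof -
    have "(\<integral>x. f x * (exp (c * t * g x) - 1 - c * t * g x) \<partial>N)
        = (\<integral>x. (exp (c * t * g x) * f x - f x) - (c * t) * (f x * g x) \<partial>N)"
      by (intro Bochner_Integration.integral_cong) (auto simp: algebra_simps)
    also have "\<dots> = F t - (\<integral>x. f x \<partial>N) - (c * t) * (\<integral>x. f x * g x \<partial>N)"
      using intF intf intfg by (simp add: F_def)
    finally show ?thesis by (simp add: F_def D_def)
  qed
  have Rb: "\<bar>F t - F 0 - t * D\<bar> \<le> K * t^2 * m" if t1: "\<bar>t\<bar> \<le> 1" for t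
  proof -
    have "\<bar>f x * (exp (c * t * g x) - 1 - c * t * g x)\<bar> \<le> K * t^2" for x
    proof -
      let ?u = "c * t * g x"
      have u1: "\<bar>?u\<bar> \<le> \<bar>c\<bar> * Bg"
      proof -
        have "\<bar>?u\<bar> = \<bar>c\<bar> * (\<bar>t\<bar> * \<bar>g x\<bar>)" by (simp add: abs_mult)
        also have "\<dots> \<le> \<bar>c\<bar> * (1 * Bg)" using t1 gb[of x]
          by (intro mult_left_mono mult_mono) auto
        finally show ?thesis by simp
      qed
      have u2: "?u^2 \<le> c^2 * Bg^2 * t^2"
      proof -
        have "?u^2 = c^2 * t^2 * (g x)^2" by (simp add: power_mult_distrib)
        also have "\<dots> \<le> c^2 * t^2 * Bg^2" using gb[of x]
          by (intro mult_left_mono) (metis abs_le_square_iff abs_of_nonneg Bg0, simp)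
        finally show ?thesis by (simp add: algebra_simps)
      qed
      have "\<bar>exp ?u - 1 - ?u\<bar> \<le> exp \<bar>?u\<bar> * ?u^2" by (rule exp_taylor2)
      also have "\<dots> \<le> exp (\<bar>c\<bar> * Bg) * (c^2 * Bg^2 * t^2)"
        using u1 u2 by (intro mult_mono) auto
      finally have e: "\<bar>exp ?u - 1 - ?u\<bar> \<le> exp (\<bar>c\<bar> * Bg) * (c^2 * Bg^2 * t^2)" .
      have "\<bar>f x * (exp ?u - 1 - ?u)\<bar> = \<bar>f x\<bar> * \<bar>exp ?u - 1 - ?u\<bar>" by (simp add: abs_mult)
      also have "\<dots> \<le> Bf * (exp (\<bar>c\<bar> * Bg) * (c^2 * Bg^2 * t^2))"
        using fb[of x] e by (intro mult_mono) auto
      finally show ?thesis by (simp add: K_def algebra_simps)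
    qed
    then have "\<bar>\<integral>x. f x * (exp (c * t * g x) - 1 - c * t * g x) \<partial>N\<bar> \<le> K * t^2 * measure N (space N)"
      by (intro int_bound[OF fm]) (use fM gM in measurable)
    then show ?thesis using R by (simp add: m_def)
  qed
  have lim0: "((\<lambda>t. (F t - F 0 - t * D) / t) \<longlongrightarrow> 0) (at 0)"
  proof (rule Lim_null_comparison)
    have pw: "norm ((F t - F 0 - t * D) / t) \<le> K * m * \<bar>t\<bar>" if t: "t \<noteq> 0" "\<bar>t\<bar> \<le> 1" for t
    proof -
      have "norm ((F t - F 0 - t * D) / t) = \<bar>F t - F 0 - t * D\<bar> / \<bar>t\<bar>" by (simp add: abs_divide)
      also have "\<dots> \<le> K * t^2 * m / \<bar>t\<bar>" using Rb[OF t(2)] t(1) by (intro divide_right_mono) auto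
      also have "\<dots> = K * m * \<bar>t\<bar>" using t(1) by (simp add: power2_eq_square field_simps abs_mult_self_eq)
      finally show ?thesis .
    qed
    show "\<forall>\<^sub>F t in at 0. norm ((F t - F 0 - t * D) / t) \<le> K * m * \<bar>t\<bar>"
      unfolding eventually_at by (intro exI[of _ 1]) (simp del: norm_divide real_norm_def, metis pw real_norm_def less_imp_le)
    show "((\<lambda>t. K * m * \<bar>t\<bar>) \<longlongrightarrow> 0) (at (0::real))"
    proof -
      have "((\<lambda>t. K * m * \<bar>t\<bar>) \<longlongrightarrow> K * m * \<bar>0::real\<bar>) (at (0::real))"
        by (intro tendsto_intros)
      then show ?thesis by simp
    qed
  qed
  have "((\<lambda>t. (F t - F 0) / (t - 0)) \<longlongrightarrow> D) (at 0)"
  proof -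
    have "((\<lambda>t. D + (F t - F 0 - t * D) / t) \<longlongrightarrow> D + 0) (at 0)"
      by (intro tendsto_add tendsto_const lim0)
    moreover have "\<forall>\<^sub>F t in at 0. D + (F t - F 0 - t * D) / t = (F t - F 0) / (t - 0)"
      unfolding eventually_at by (intro exI[of _ 1]) (auto simp: field_simps)
    ultimately show ?thesis by (simp add: tendsto_cong)
  qed
  then show ?thesis unfolding has_field_derivative_iff F_def D_def by simp
qed

lemma chain_q:
  fixes q :: "real^'n \<Rightarrow> real" and F :: "'n \<Rightarrow> real \<Rightarrow> real"
  assumes q: "C2_fun q" and F: "\<And>j. (F j has_real_derivative d j) (at 0)"
  shows "((\<lambda>t. q (\<chi> j. F j t)) has_real_derivative
           (\<Sum>i\<in>UNIV. partial_q q i (\<chi> j. F j 0) * d i)) (at 0)"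
proof -
  obtain D where D: "\<And>x. (q has_derivative blinfun_apply (D x)) (at x)"
    using q unfolding C2_fun_def by blast
  let ?v = "\<chi> j. d j"
  let ?x = "\<chi> j. F j 0"
  have vec: "((\<lambda>t. \<chi> j. F j t) has_derivative (\<lambda>t. t *\<^sub>R ?v)) (at 0)"
  proof -
    have "((\<lambda>t. (\<chi> j. F j t) \<bullet> b) has_derivative (\<lambda>t. (t *\<^sub>R ?v) \<bullet> b)) (at 0 within UNIV)"
      if "b \<in> Basis" for b
    proof -
      obtain i where b: "b = axis i 1" using \<open>b \<in> Basis\<close> by (auto simp: Basis_vec_def)
      have "(\<lambda>t. t * d i) = (*) (d i)" by (rule ext) (simp add: mult.commute)
      then have "(F i has_derivative (\<lambda>t. t * d i)) (at 0)"
        using F[of i] by (simp add: has_field_derivative_def)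
      then show ?thesis by (simp add: b inner_axis)
    qed
    then show ?thesis using has_derivative_componentwise_within by blast
  qed
  have comp: "((\<lambda>t. q (\<chi> j. F j t)) has_derivative (\<lambda>t. blinfun_apply (D ?x) (t *\<^sub>R ?v))) (at 0)"
    using has_derivative_compose[OF vec D] by simp
  have pq: "partial_q q i ?x = blinfun_apply (D ?x) (axis i 1)" for i
    unfolding partial_q_def using frechet_derivative_at[OF D[of ?x]] by simp
  have lin: "blinfun_apply (D ?x) ?v = (\<Sum>i\<in>UNIV. partial_q q i ?x * d i)"
  proof -
    have "?v = (\<Sum>i\<in>UNIV. d i *\<^sub>R axis i 1)"
      using basis_expansion[of ?v] by (simp add: scalar_mult_eq_scaleR)
    then have "blinfun_apply (D ?x) ?v = (\<Sum>i\<in>UNIV. d i *\<^sub>R blinfun_apply (D ?x) (axis i 1))"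
      by (simp add: blinfun.sum_right blinfun.scaleR_right)
    then show ?thesis by (simp add: pq mult.commute)
  qed
  have "(\<lambda>t. blinfun_apply (D ?x) (t *\<^sub>R ?v)) = (\<lambda>t. (\<Sum>i\<in>UNIV. partial_q q i ?x * d i) * t)"
    by (rule ext) (simp add: blinfun.scaleR_right lin mult.commute)
  then show ?thesis using comp by (simp add: has_field_derivative_def)
qed

theorem mainTheorem9:
  fixes n :: nat and \<gamma> :: real
    and \<omega> :: "'m::metric_space measure"          \<comment> \<open>volume measure omega_ref\<close>
    and \<mu> :: "'f::real_vector measure"             \<comment> \<open>Gaussian field measure mu_ref\<close>
    and Mg :: "'f \<Rightarrow> 'm measure"                 \<comment> \<open>GMC map M^gamma_ref\<close>
    and E :: "('m \<Rightarrow> real) set"                  \<comment> \<open>E = H^{n/2}_ref\<close>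
    and Cinf :: "('m \<Rightarrow> real) set"               \<comment> \<open>smooth functions C^infinity(M)\<close>
    and \<iota> :: "('m \<Rightarrow> real) \<Rightarrow> 'f"               \<comment> \<open>embedding of E into field space\<close>
    and q :: "real^'n \<Rightarrow> real" and hs :: "'n \<Rightarrow> 'm \<Rightarrow> real" and i0 :: 'n
  assumes dim: "even n" "n > 0"
    and gamma: "0 \<le> \<gamma>" "\<gamma> < sqrt (2 * real n)"
    and M_compact: "compact (UNIV :: 'm set)"
    and omega: "finite_measure \<omega>" "sets \<omega> = sets borel" "emeasure \<omega> UNIV > 0"
    and mu: "prob_space \<mu>"
    and Mg_meas: "\<And>\<psi>. finite_measure (Mg \<psi>) \<and> sets (Mg \<psi>) = sets borel"
    and Cinf_cont: "\<And>f. f \<in> Cinf \<Longrightarrow> continuous_on UNIV f"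
    and Cinf_E: "Cinf \<subseteq> E"
    and E_add: "\<And>f g. f \<in> E \<Longrightarrow> g \<in> E \<Longrightarrow> (\<lambda>x. f x + g x) \<in> E"
    and E_scale: "\<And>f c. f \<in> E \<Longrightarrow> (\<lambda>x. c * f x) \<in> E"
    and E_const: "\<And>c. (\<lambda>_. c) \<in> E"
    and iota_add: "\<And>f g. f \<in> E \<Longrightarrow> g \<in> E \<Longrightarrow> \<iota> (\<lambda>x. f x + g x) = \<iota> f + \<iota> g"
    and iota_scale: "\<And>f c. f \<in> E \<Longrightarrow> \<iota> (\<lambda>x. c * f x) = c *\<^sub>R \<iota> f"
    and Mg_shift: "AE \<psi> in \<mu>. \<forall>h\<in>E. (\<integral>x. h x \<partial>\<omega>) = 0 \<longrightarrow>
                     Mg (\<psi> + \<iota> h) = density (Mg \<psi>) (\<lambda>x. ennreal (exp (\<gamma> * h x)))"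
    and Mg_const: "\<And>\<psi> c. Mg (\<psi> + \<iota> (\<lambda>_. c)) = density (Mg \<psi>) (\<lambda>_. ennreal (exp (\<gamma> * c)))"
    and q_C2: "C2_fun q"
    and hs_smooth: "\<And>i. hs i \<in> Cinf"
    and h0: "hs i0 = (\<lambda>_. 1)"
  shows
    "(\<forall>h\<in>E. continuous_on UNIV h \<longrightarrow>
        (AE \<psi> in \<mu>.
          ((\<lambda>t. cyl_functional q hs Mg (\<psi> + t *\<^sub>R \<iota> h)) has_real_derivative
             \<gamma> * (\<Sum>i\<in>UNIV. partial_q q i (\<chi> j. integral\<^sup>L (Mg \<psi>) (hs j))
                      * integral\<^sup>L (Mg \<psi>) (\<lambda>x. hs i x * h x))) (at 0)))
     \<and> (supp_class_C q i0 \<longrightarrow>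
        (\<forall>h\<in>E. continuous_on UNIV h \<longrightarrow>
           (\<exists>C. AE \<psi> in \<mu>. \<bar>dir_deriv (cyl_functional q hs Mg) (\<iota> h) \<psi>\<bar> \<le> C)))"
proof -
  have sp\<omega>: "space \<omega> = UNIV" using sets_eq_imp_space_eq[OF omega(2)] by simp
  have spM: "space (Mg \<psi>) = UNIV" for \<psi> using sets_eq_imp_space_eq[of "Mg \<psi>" borel] Mg_meas by simp
  have bnd: "\<exists>B. \<forall>x. \<bar>f x\<bar> \<le> B" if "continuous_on UNIV f" for f :: "'m \<Rightarrow> real"
  proof -
    have "compact (f ` UNIV)" by (rule compact_continuous_image[OF that M_compact])
    then have "bounded (f ` UNIV)" by (rule compact_imp_bounded)
    then show ?thesis unfolding bounded_real by auto
  qed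
  have measM: "f \<in> borel_measurable (Mg \<psi>)" if "continuous_on UNIV f" for f :: "'m \<Rightarrow> real" and \<psi>
    using measurable_cong_sets[of "Mg \<psi>" borel borel borel] Mg_meas borel_measurable_continuous_onI[OF that]
    by blast
  have meas\<omega>: "f \<in> borel_measurable \<omega>" if "continuous_on UNIV f" for f :: "'m \<Rightarrow> real"
    using measurable_cong_sets[of \<omega> borel borel borel] omega(2) borel_measurable_continuous_onI[OF that]
    by blast
  have hsc: "continuous_on UNIV (hs i)" for i using Cinf_cont hs_smooth by blast
  obtain Bs where Bs: "\<And>i x. \<bar>hs i x\<bar> \<le> Bs i"
    using bnd[OF hsc] by metis
  interpret \<omega>: finite_measure \<omega> by (rule omega(1))
  define m where "m = measure \<omega> UNIV"
  have m0: "0 < m"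
  proof -
    have "emeasure \<omega> UNIV = ennreal m" using \<omega>.emeasure_eq_measure m_def by simp
    then show ?thesis using omega(3) by simp
  qed
  have P1: "\<forall>h\<in>E. continuous_on UNIV h \<longrightarrow>
        (AE \<psi> in \<mu>.
          ((\<lambda>t. cyl_functional q hs Mg (\<psi> + t *\<^sub>R \<iota> h)) has_real_derivative
             \<gamma> * (\<Sum>i\<in>UNIV. partial_q q i (\<chi> j. integral\<^sup>L (Mg \<psi>) (hs j))
                      * integral\<^sup>L (Mg \<psi>) (\<lambda>x. hs i x * h x))) (at 0))"
  proof (intro ballI impI)
    fix h assume hE: "h \<in> E" and hc: "continuous_on UNIV h"
    obtain Bh where Bh: "\<And>x. \<bar>h x\<bar> \<le> Bh" using bnd[OF hc] by metis
    have inth: "integrable \<omega> h"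
      by (rule \<omega>.integrable_const_bound[where B=Bh]) (use Bh meas\<omega>[OF hc] in auto)
    define c where "c = (\<integral>x. h x \<partial>\<omega>) / m"
    show "AE \<psi> in \<mu>.
          ((\<lambda>t. cyl_functional q hs Mg (\<psi> + t *\<^sub>R \<iota> h)) has_real_derivative
             \<gamma> * (\<Sum>i\<in>UNIV. partial_q q i (\<chi> j. integral\<^sup>L (Mg \<psi>) (hs j))
                      * integral\<^sup>L (Mg \<psi>) (\<lambda>x. hs i x * h x))) (at 0)"
    proof (rule AE_mp[OF Mg_shift], intro AE_I2 impI)
      fix \<psi> assume sh: "\<forall>h\<in>E. (\<integral>x. h x \<partial>\<omega>) = 0 \<longrightarrow>
                     Mg (\<psi> + \<iota> h) = density (Mg \<psi>) (\<lambda>x. ennreal (exp (\<gamma> * h x)))"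
      have Mt: "Mg (\<psi> + t *\<^sub>R \<iota> h) = density (Mg \<psi>) (\<lambda>x. ennreal (exp (\<gamma> * t * h x)))" for t
      proof -
        define g where "g = (\<lambda>x. t * (h x + - c))"
        have gE: "g \<in> E" unfolding g_def by (rule E_scale[OF E_add[OF hE E_const]])
        have "(\<integral>x. g x \<partial>\<omega>) = t * ((\<integral>x. h x \<partial>\<omega>) + - c * m)"
          unfolding g_def using inth by (simp add: m_def sp\<omega>)
        also have "\<dots> = 0" using m0 by (simp add: c_def)
        finally have g0: "(\<integral>x. g x \<partial>\<omega>) = 0" .
        have "t *\<^sub>R \<iota> h = \<iota> (\<lambda>x. t * h x)" using iota_scale[OF hE] by simp
        also have "(\<lambda>x. t * h x) = (\<lambda>x. g x + (\<lambda>_. t * c) x)" by (rule ext) (simp add: g_def algebra_simps)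
        also have "\<iota> \<dots> = \<iota> g + \<iota> (\<lambda>_. t * c)" by (rule iota_add[OF gE E_const])
        finally have eq\<psi>: "\<psi> + t *\<^sub>R \<iota> h = (\<psi> + \<iota> g) + \<iota> (\<lambda>_. t * c)" by (simp add: add.assoc)
        have "Mg (\<psi> + t *\<^sub>R \<iota> h) = density (Mg (\<psi> + \<iota> g)) (\<lambda>_. ennreal (exp (\<gamma> * (t * c))))"
          unfolding eq\<psi> by (rule Mg_const)
        also have "\<dots> = density (density (Mg \<psi>) (\<lambda>x. ennreal (exp (\<gamma> * g x)))) (\<lambda>_. ennreal (exp (\<gamma> * (t * c))))"
          using sh gE g0 by simp
        also have "\<dots> = density (Mg \<psi>) (\<lambda>x. ennreal (exp (\<gamma> * g x)) * ennreal (exp (\<gamma> * (t * c))))"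
        proof (rule density_density_eq)
          have "g \<in> borel_measurable (Mg \<psi>)" unfolding g_def using measM[OF hc] by measurable
          then show "(\<lambda>x. ennreal (exp (\<gamma> * g x))) \<in> borel_measurable (Mg \<psi>)" by measurable
        qed simp
        also have "(\<lambda>x. ennreal (exp (\<gamma> * g x)) * ennreal (exp (\<gamma> * (t * c)))) = (\<lambda>x. ennreal (exp (\<gamma> * t * h x)))"
        proof (rule ext)
          fix x
          have "ennreal (exp (\<gamma> * g x)) * ennreal (exp (\<gamma> * (t * c))) = ennreal (exp (\<gamma> * g x) * exp (\<gamma> * (t * c)))"
            by (simp add: ennreal_mult)
          also have "exp (\<gamma> * g x) * exp (\<gamma> * (t * c)) = exp (\<gamma> * t * h x)"
            by (simp add: g_def exp_add[symmetric] algebra_simps)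
          finally show "ennreal (exp (\<gamma> * g x)) * ennreal (exp (\<gamma> * (t * c))) = ennreal (exp (\<gamma> * t * h x))" .
        qed
        finally show ?thesis .
      qed
      define F where "F j t = (\<integral>x. exp (\<gamma> * t * h x) * hs j x \<partial>Mg \<psi>)" for j t
      have cyl: "cyl_functional q hs Mg (\<psi> + t *\<^sub>R \<iota> h) = q (\<chi> j. F j t)" for t
      proof -
        have "integral\<^sup>L (Mg (\<psi> + t *\<^sub>R \<iota> h)) (hs j) = F j t" for j
        proof -
          have em: "(\<lambda>x. exp (\<gamma> * t * h x)) \<in> borel_measurable (Mg \<psi>)"
            using measM[OF hc] by measurable
          show ?thesis unfolding Mt F_def
            by (subst integral_density) (use em measM[OF hsc] in auto)
        qed
        then show ?thesis unfolding cyl_functional_def by simp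
      qed
      have F0: "F j 0 = integral\<^sup>L (Mg \<psi>) (hs j)" for j by (simp add: F_def)
      have dF: "(F j has_real_derivative \<gamma> * (\<integral>x. hs j x * h x \<partial>Mg \<psi>)) (at 0)" for j
        unfolding F_def
        by (rule deriv_int[where Bf="Bs j" and Bg=Bh]) (use Mg_meas measM[OF hc] measM[OF hsc] Bs Bh in auto)
      have "((\<lambda>t. q (\<chi> j. F j t)) has_real_derivative
           (\<Sum>i\<in>UNIV. partial_q q i (\<chi> j. F j 0) * (\<gamma> * (\<integral>x. hs i x * h x \<partial>Mg \<psi>)))) (at 0)"
        by (rule chain_q[OF q_C2 dF])
      then show "((\<lambda>t. cyl_functional q hs Mg (\<psi> + t *\<^sub>R \<iota> h)) has_real_derivative
             \<gamma> * (\<Sum>i\<in>UNIV. partial_q q i (\<chi> j. integral\<^sup>L (Mg \<psi>) (hs j))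
                      * integral\<^sup>L (Mg \<psi>) (\<lambda>x. hs i x * h x))) (at 0)"
        unfolding cyl F0 by (simp add: sum_distrib_left algebra_simps)
    qed
  qed
  have P2: "\<exists>C. AE \<psi> in \<mu>. \<bar>dir_deriv (cyl_functional q hs Mg) (\<iota> h) \<psi>\<bar> \<le> C"
    if sC: "supp_class_C q i0" and hE: "h \<in> E" and hc: "continuous_on UNIV h" for h
  proof -
    obtain \<epsilon> K where e0: "\<epsilon> > 0" and cK: "compact K" and
      supp: "closure {x. q x \<noteq> 0} \<subseteq>
          {x. \<epsilon> < x $ i0 \<and> x $ i0 < 1 / \<epsilon> \<and> (\<chi> j. if j = i0 then 0 else x $ j) \<in> K}"
      using sC unfolding supp_class_C_def by blast
    define S where "S = closure {x. q x \<noteq> 0}"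
    obtain D D2 where D: "\<And>x. (q has_derivative blinfun_apply (D x)) (at x)"
      and D2: "\<And>x. (D has_derivative blinfun_apply (D2 x)) (at x)"
      using q_C2 unfolding C2_fun_def by blast
    have Dc: "continuous_on UNIV D" by (rule has_derivative_continuous_on) (use D2 in auto)
    obtain BK where BK: "\<And>y. y \<in> K \<Longrightarrow> norm y \<le> BK"
      using compact_imp_bounded[OF cK] unfolding bounded_iff by blast
    have bS: "bounded S" unfolding bounded_iff
    proof (intro exI ballI)
      fix x assume xS: "x \<in> S"
      then have xs: "\<epsilon> < x $ i0" "x $ i0 < 1 / \<epsilon>" "(\<chi> j. if j = i0 then 0 else x $ j) \<in> K"
        using supp unfolding S_def by auto
      have cj: "\<bar>x $ j\<bar> \<le> BK + 1 / \<epsilon>" for j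
      proof (cases "j = i0")
        case True
        have "0 \<le> BK" using BK[OF xs(3)] norm_ge_zero[of "\<chi> j. if j = i0 then 0 else x $ j"] by linarith
        then show ?thesis using xs e0 True by auto
      next
        case False
        have "\<bar>x $ j\<bar> = \<bar>(\<chi> j. if j = i0 then 0 else x $ j) $ j\<bar>" using False by simp
        also have "\<dots> \<le> norm (\<chi> j. if j = i0 then 0 else x $ j)" by (rule component_le_norm_cart)
        also have "\<dots> \<le> BK" by (rule BK[OF xs(3)])
        finally have "\<bar>x $ j\<bar> \<le> BK" .
        moreover have "0 < 1 / \<epsilon>" using e0 by simp
        ultimately show ?thesis by linarith
      qed
      have "norm x \<le> (\<Sum>j\<in>UNIV. \<bar>x $ j\<bar>)" by (rule norm_le_l1_cart)
      also have "\<dots> \<le> (\<Sum>j\<in>(UNIV::'n set). BK + 1 / \<epsilon>)" by (rule sum_mono) (rule cj)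
      finally show "norm x \<le> real CARD('n) * (BK + 1 / \<epsilon>)" by simp
    qed
    have cS: "compact S" using bS unfolding S_def by (simp add: compact_eq_bounded_closed)
    obtain BD where BD: "\<And>x. x \<in> S \<Longrightarrow> norm (D x) \<le> BD"
    proof -
      have "compact (D ` S)" by (rule compact_continuous_image[OF continuous_on_subset[OF Dc] cS]) simp
      then have "bounded (D ` S)" by (rule compact_imp_bounded)
      then obtain B where "\<forall>y\<in>D ` S. norm y \<le> B" unfolding bounded_iff by auto
      then have "\<And>x. x \<in> S \<Longrightarrow> norm (D x) \<le> B" by blast
      then show ?thesis by (rule that)
    qed
    have pqD: "partial_q q i x = blinfun_apply (D x) (axis i 1)" for i x
      unfolding partial_q_def using frechet_derivative_at[OF D[of x]] by simp
    have Dz: "partial_q q i x = 0" if "x \<notin> S" for i x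
    proof -
      have "(q has_derivative (\<lambda>_. 0)) (at x)"
      proof (rule has_derivative_transform_within_open[OF has_derivative_const[of 0] _ _])
        show "open (- S)" unfolding S_def by (rule open_Compl) (rule closed_closure)
        show "x \<in> - S" using that by simp
        show "0 = q y" if "y \<in> - S" for y
          using that closure_subset[of "{x. q x \<noteq> 0}"] unfolding S_def by auto
      qed
      then have "(\<lambda>_. 0) = frechet_derivative q (at x)" by (rule frechet_derivative_at)
      then show ?thesis unfolding partial_q_def by (metis)
    qed
    have Db: "\<bar>partial_q q i x\<bar> \<le> \<bar>BD\<bar>" if "x \<in> S" for i x
    proof -
      have "\<bar>partial_q q i x\<bar> \<le> norm (D x) * norm (axis i (1::real))"
        unfolding pqD using norm_blinfun[of "D x" "axis i 1"] by simp
      also have "\<dots> \<le> \<bar>BD\<bar>" using BD[OF that] by simp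
      finally show ?thesis .
    qed
    obtain Bh where Bh: "\<And>x. \<bar>h x\<bar> \<le> Bh" using bnd[OF hc] by metis
    define Bi where "Bi i = \<bar>Bs i\<bar> * \<bar>Bh\<bar>" for i
    have Bi: "\<bar>hs i x * h x\<bar> \<le> Bi i" for i x
      unfolding Bi_def abs_mult using Bs[of i x] Bh[of x] by (intro mult_mono) auto
    define C where "C = \<gamma> * (\<Sum>i\<in>UNIV. \<bar>BD\<bar> * (Bi i * (1 / \<epsilon>)))"
    have C0: "0 \<le> C" unfolding C_def Bi_def using gamma(1) e0
      by (intro mult_nonneg_nonneg sum_nonneg) auto
    show ?thesis
    proof (intro exI[of _ C], rule AE_mp[OF P1[rule_format, OF hE hc]], intro AE_I2 impI)
      fix \<psi>
      define x where "x = (\<chi> j. integral\<^sup>L (Mg \<psi>) (hs j))"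
      define a where "a i = integral\<^sup>L (Mg \<psi>) (\<lambda>x. hs i x * h x)" for i
      assume "((\<lambda>t. cyl_functional q hs Mg (\<psi> + t *\<^sub>R \<iota> h)) has_real_derivative
             \<gamma> * (\<Sum>i\<in>UNIV. partial_q q i (\<chi> j. integral\<^sup>L (Mg \<psi>) (hs j))
                      * integral\<^sup>L (Mg \<psi>) (\<lambda>x. hs i x * h x))) (at 0)"
      then have dd: "dir_deriv (cyl_functional q hs Mg) (\<iota> h) \<psi> = \<gamma> * (\<Sum>i\<in>UNIV. partial_q q i x * a i)"
        unfolding dir_deriv_def x_def a_def by (rule DERIV_imp_deriv)
      show "\<bar>dir_deriv (cyl_functional q hs Mg) (\<iota> h) \<psi>\<bar> \<le> C"
      proof (cases "x \<in> S")
        case False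
        then have "\<And>i. partial_q q i x = 0" using Dz by blast
        then show ?thesis unfolding dd using C0 by simp
      next
        case True
        interpret N: finite_measure "Mg \<psi>" using Mg_meas by blast
        have "x $ i0 = measure (Mg \<psi>) (space (Mg \<psi>))" by (simp add: x_def h0)
        moreover have "x $ i0 < 1 / \<epsilon>" using True supp unfolding S_def by auto
        ultimately have mm: "measure (Mg \<psi>) (space (Mg \<psi>)) \<le> 1 / \<epsilon>" by simp
        have ab: "\<bar>a i\<bar> \<le> Bi i * (1 / \<epsilon>)" for i
        proof -
          have "\<bar>a i\<bar> \<le> Bi i * measure (Mg \<psi>) (space (Mg \<psi>))"
            unfolding a_def by (rule int_bound) (use Mg_meas measM[OF hc] measM[OF hsc] Bi in auto)
          also have "\<dots> \<le> Bi i * (1 / \<epsilon>)" using mm by (intro mult_left_mono) (auto simp: Bi_def)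
          finally show ?thesis .
        qed
        have "\<bar>\<Sum>i\<in>UNIV. partial_q q i x * a i\<bar> \<le> (\<Sum>i\<in>UNIV. \<bar>partial_q q i x * a i\<bar>)"
          by (rule sum_abs)
        also have "\<dots> \<le> (\<Sum>i\<in>UNIV. \<bar>BD\<bar> * (Bi i * (1 / \<epsilon>)))"
          unfolding abs_mult by (intro sum_mono mult_mono Db[OF True] ab abs_ge_zero)
        finally have "\<bar>\<Sum>i\<in>UNIV. partial_q q i x * a i\<bar> \<le> (\<Sum>i\<in>UNIV. \<bar>BD\<bar> * (Bi i * (1 / \<epsilon>)))" .
        then have "\<gamma> * \<bar>\<Sum>i\<in>UNIV. partial_q q i x * a i\<bar> \<le> C"
          unfolding C_def by (rule mult_left_mono) (rule gamma(1))
        then show ?thesis unfolding dd abs_mult using gamma(1) by simp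
      qed
    qed
  qed
  show ?thesis using P1 P2 by blast
qed

end
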